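(* Let $G$ be a $d$-regular bipartite graph on vertex set $V$, $|V|=n$, whose second largest adjacency eigenvalue is at most $\lambda$, where $0<\lambda<d/2$. Then every nonempty $U\subseteq V$ with $|U|<\frac{\lambda^2n}{d^2}$ satisfies $$|N(U)|>\frac{(d-2\lambda)^2}{4\lambda^2}|U|.$$
   Context: $N(U)$ is the set of vertices not in $U$ having a neighbor in $U$. *)

theory Defs
  imports "HOL-Analysis.Analysis" "HOL-Computational_Algebra.Polynomial"
begin

text \<open>Finite simple graphs on a finite vertex type 'a (vertex set V = UNIV),
  given by a symmetric irreflexive adjacency relation.\<close>

definition simple_graph :: "('a \<Rightarrow> 'a \<Rightarrow> bool) \<Rightarrow> bool" where
  "simple_graph E \<longleftrightarrow> (\<forall>u v. E u v \<longrightarrow> E v u) \<and> (\<forall>v. \<not> E v v)"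

definition regular :: "('a \<Rightarrow> 'a \<Rightarrow> bool) \<Rightarrow> nat \<Rightarrow> bool" where
  "regular E d \<longleftrightarrow> (\<forall>v. card {u. E v u} = d)"

definition bipartite :: "('a \<Rightarrow> 'a \<Rightarrow> bool) \<Rightarrow> bool" where
  "bipartite E \<longleftrightarrow> (\<exists>X. \<forall>u v. E u v \<longrightarrow> (u \<in> X \<longleftrightarrow> v \<notin> X))"

definition nbhd :: "('a \<Rightarrow> 'a \<Rightarrow> bool) \<Rightarrow> 'a set \<Rightarrow> 'a set" where
  "nbhd E U = {v. v \<notin> U \<and> (\<exists>u\<in>U. E u v)}"

definition adj_matrix :: "('a::finite \<Rightarrow> 'a \<Rightarrow> bool) \<Rightarrow> real^'a^'a" where
  "adj_matrix E = (\<chi> i j. if E i j then 1 else 0)"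

definition char_poly :: "real^'n^'n \<Rightarrow> real poly" where
  "char_poly A = det (\<chi> i j. (if i = j then [:0, 1:] else 0) - [:A $ i $ j:])"

definition is_eigenvalue :: "real^'n^'n \<Rightarrow> real \<Rightarrow> bool" where
  "is_eigenvalue A \<mu> \<longleftrightarrow> poly (char_poly A) \<mu> = 0"

text \<open>Second largest eigenvalue counted with multiplicity (algebraic multiplicity
  = root order in the characteristic polynomial): the largest eigenvalue \<mu> such
  that at least two eigenvalues (with multiplicity) are \<ge> \<mu>.\<close>
definition second_eigenvalue :: "real^'n^'n \<Rightarrow> real" where
  "second_eigenvalue A = Max {\<mu>. is_eigenvalue A \<mu> \<and>
      (\<Sum>\<nu>\<in>{\<nu>. is_eigenvalue A \<nu> \<and> \<mu> \<le> \<nu>}. order \<nu> (char_poly A)) \<ge> 2}"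

end

theory Submission imports Defs begin


lemma det_kernel:
  fixes M :: "real^'n^'n"
  assumes "M *v x = 0" "x \<noteq> 0" shows "det M = 0"
  by (metis assms invertible_det_nz invertible_left_inverse matrix_left_invertible_ker)

definition cmat :: "real^'n^'n \<Rightarrow> real \<Rightarrow> real^'n^'n" where
  "cmat A v = (\<chi> i j. (if i = j then v else 0) - A$i$j)"

lemma poly_char_poly:
  "poly (char_poly A) v = det (cmat A v)"
  unfolding char_poly_def det_def cmat_def
  by (simp add: poly_sum poly_prod) (auto intro!: sum.cong prod.cong)

lemma pderiv_sum: "pderiv (sum f S) = (\<Sum>x\<in>S. pderiv (f x))"
  by (induction S rule: infinite_finite_induct) (auto simp: pderiv_add)

definition rmat :: "real^'n^'n \<Rightarrow> 'n \<Rightarrow> real^'n^'n" where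
  "rmat N a = (\<chi> i j. if i = a then (if j = a then 1 else 0) else N$i$j)"

lemma poly_pderiv_char_poly:
  fixes A :: "real^'n^'n"
  shows "poly (pderiv (char_poly A)) v = (\<Sum>a\<in>UNIV. det (rmat (cmat A v) a))"
proof -
  let ?M = "(\<chi> i j. (if i = j then [:0, 1:] else 0) - [:A $ i $ j:]) :: real poly^'n^'n"
  have dM: "pderiv (?M$i$j) = (if i = j then 1 else 0)" for i j
    by (simp add: pderiv_diff pderiv_pCons one_pCons)
  have dM': "poly (pderiv (?M$i$j)) v = (if i = j then 1 else 0)" for i j
    by (simp only: dM) simp
  have pM: "poly (?M$i$j) v = cmat A v $i$j" for i j
    by (simp add: cmat_def)
  have "pderiv (char_poly A) = (\<Sum>p | p permutes UNIV. of_int (sign p) *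
      (\<Sum>a\<in>UNIV. prod (\<lambda>i. ?M$i$p i) (UNIV - {a}) * pderiv (?M$a$p a)))"
    unfolding char_poly_def det_def pderiv_sum
    by (intro sum.cong refl) (simp add: pderiv_mult pderiv_prod of_int_poly pderiv_smult)
  then have "poly (pderiv (char_poly A)) v = (\<Sum>p | p permutes UNIV. of_int (sign p) *
      (\<Sum>a\<in>UNIV. prod (\<lambda>i. cmat A v$i$p i) (UNIV - {a}) * (if a = p a then 1 else 0)))"
    by (simp add: poly_sum poly_prod dM' pM del: vec_lambda_beta)
  also have "\<dots> = (\<Sum>a\<in>UNIV. \<Sum>p | p permutes UNIV. of_int (sign p) *
      (prod (\<lambda>i. cmat A v$i$p i) (UNIV - {a}) * (if a = p a then 1 else 0)))"
    by (simp add: sum_distrib_left sum.swap[of _ UNIV])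
  also have "\<dots> = (\<Sum>a\<in>UNIV. det (rmat (cmat A v) a))"
    unfolding det_def
  proof (intro sum.cong refl)
    fix a p
    have "prod (\<lambda>i. rmat (cmat A v) a $i$p i) UNIV
       = rmat (cmat A v) a $a$p a * prod (\<lambda>i. rmat (cmat A v) a $i$p i) (UNIV - {a})"
      by (simp add: prod.remove)
    also have "prod (\<lambda>i. rmat (cmat A v) a $i$p i) (UNIV - {a}) = prod (\<lambda>i. cmat A v$i$p i) (UNIV - {a})"
      by (intro prod.cong) (auto simp: rmat_def)
    finally show "of_int (sign p) *
      (prod (\<lambda>i. cmat A v$i$p i) (UNIV - {a}) * (if a = p a then 1 else 0))
      = of_int (sign p) * prod (\<lambda>i. rmat (cmat A v) a $i$p i) UNIV"
      by (auto simp: rmat_def)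
  qed
  finally show ?thesis .
qed

lemma det_rmat_zero:
  fixes N :: "real^'n^'n"
  assumes "N *v (\<chi> i. 1) = 0" "N *v z = 0" "z \<bullet> (\<chi> i. 1) = 0" "z \<noteq> 0"
  shows "det (rmat N a) = 0"
proof -
  define y where "y = z$a *s (\<chi> i. 1) - z"
  have ya: "y$a = 0" by (simp add: y_def)
  have Ny: "N *v y = 0"
    using assms by (simp add: y_def matrix_vector_mult_diff_distrib scalar_mult_eq_scaleR matrix_vector_mult_scaleR)
  have "y \<noteq> 0"
  proof
    assume "y = 0"
    then have "\<forall>i. z$a = z$i" by (simp add: y_def vec_eq_iff)
    then have zz: "\<And>i. z$i = z$a" by metis
    have "z \<bullet> (\<chi> i. 1) = (\<Sum>i\<in>(UNIV::'n set). z$a)"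
      unfolding inner_vec_def by (rule sum.cong[OF refl]) (metis zz inner_real_def mult_1_right vec_lambda_beta)
    then have "z \<bullet> (\<chi> i. 1) = z$a * real CARD('n)" by simp
    then have "z$a = 0" using assms(3) by simp
    then show False using zz assms(4) by (simp add: vec_eq_iff)
  qed
  have "rmat N a *v y = 0"
  proof (rule iffD2[OF vec_eq_iff], rule allI)
    fix i
    show "(rmat N a *v y)$i = 0$i"
    proof (cases "i = a")
      case True
      have "(\<Sum>j\<in>UNIV. (if j = a then 1 else 0) * y$j) = (\<Sum>j\<in>UNIV. if j = a then y$j else 0)"
        by (rule sum.cong) auto
      also have "\<dots> = y$a" by simp
      finally have "(\<Sum>j\<in>UNIV. (if j = a then 1 else 0) * y$j) = y$a" .
      then show ?thesis using ya True by (simp add: matrix_vector_mult_def rmat_def)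
    next
      case False
      have "(N *v y)$i = 0" using Ny by simp
      then show ?thesis using False by (simp add: matrix_vector_mult_def rmat_def)
    qed
  qed
  then show ?thesis using det_kernel \<open>y \<noteq> 0\<close> by blast
qed



locale bg =
  fixes E :: "'a::finite \<Rightarrow> 'a \<Rightarrow> bool" and d :: nat and X :: "'a set"
  assumes sym: "E u v \<Longrightarrow> E v u"
  and reg: "card {u. E v u} = d"
  and bip: "E u v \<Longrightarrow> (u \<in> X \<longleftrightarrow> v \<notin> X)"
  and dpos: "d > 0"
begin

definition A :: "real^'a^'a" where "A = adj_matrix E"
definition one :: "real^'a" where "one = (\<chi> i. 1)"
definition sv :: "real^'a" where "sv = (\<chi> i. if i \<in> X then 1 else -1)"

lemma Av: "(A *v x)$v = (\<Sum>u\<in>{u. E v u}. x$u)"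
proof -
  have "(A *v x)$v = (\<Sum>u\<in>UNIV. if E v u then x$u else 0)"
    unfolding A_def adj_matrix_def matrix_vector_mult_def by (simp, rule sum.cong, auto)
  also have "\<dots> = (\<Sum>u\<in>{u. E v u}. x$u)"
    by (simp add: sum.inter_filter[symmetric])
  finally show ?thesis .
qed

lemma A_one: "A *v one = real d *\<^sub>R one"
  by (simp add: vec_eq_iff Av one_def reg)

lemma A_sv: "A *v sv = (- real d) *\<^sub>R sv"
proof (rule iffD2[OF vec_eq_iff], rule allI)
  fix v
  have "(A *v sv)$v = (\<Sum>u\<in>{u. E v u}. - sv$v)"
    unfolding Av by (rule sum.cong) (auto simp: sv_def dest: bip)
  then show "(A *v sv)$v = ((- real d) *\<^sub>R sv)$v" by (simp add: reg)
qed

lemma transpose_A: "transpose A = A"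
  by (auto simp: transpose_def A_def adj_matrix_def vec_eq_iff dest: sym)

lemma A_sym: "(A *v x) \<bullet> y = x \<bullet> (A *v y)"
  using dot_lmul_matrix[of x A y] vector_transpose_matrix[of x A] transpose_A by simp

lemma A_svmult: "A *v (sv * x) = - (sv * (A *v x))"
proof (rule iffD2[OF vec_eq_iff], rule allI)
  fix v
  have "(A *v (sv * x))$v = (\<Sum>u\<in>{u. E v u}. - sv$v * x$u)"
    unfolding Av by (rule sum.cong) (auto simp: sv_def dest: bip)
  then show "(A *v (sv * x))$v = (- (sv * (A *v x)))$v"
    by (simp add: Av sum_distrib_left sum_negf)
qed

lemma sq1: "(if i\<in>X then 1 else -1::real) * (if i \<in> X then 1 else -1) = 1" by auto

lemma one_one: "one \<bullet> one = real CARD('a)"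
  by (simp add: one_def inner_vec_def)

lemma sv_sv: "sv \<bullet> sv = real CARD('a)"
  by (simp add: sv_def inner_vec_def sq1)

lemma one_sv: "one \<bullet> sv = 0"
proof -
  have "(A *v one) \<bullet> sv = one \<bullet> (A *v sv)" by (rule A_sym)
  then have "real d * (one \<bullet> sv) = - real d * (one \<bullet> sv)"
    by (simp add: A_one A_sv)
  then show ?thesis using dpos by simp
qed

lemma sv_mult_inner: "(sv * x) \<bullet> (sv * y) = x \<bullet> y"
  unfolding inner_vec_def sv_def by (simp, rule sum.cong, auto)

lemma sv_mult_one: "(sv * x) \<bullet> one = x \<bullet> sv"
  by (simp add: inner_vec_def sv_def one_def mult.commute)

lemma cmat_mult: "cmat M v *v x = v *\<^sub>R x - M *v x"
proof (rule iffD2[OF vec_eq_iff], rule allI)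
  fix i
  have "(\<Sum>j\<in>UNIV. (if i = j then v else 0) * x$j) = (\<Sum>j\<in>UNIV. if j = i then v * x$j else 0)"
    by (rule sum.cong) auto
  also have "\<dots> = v * x$i" by simp
  finally show "(cmat M v *v x)$i = (v *\<^sub>R x - M *v x)$i"
    by (simp add: cmat_def matrix_vector_mult_def left_diff_distrib sum_subtractf)
qed

lemma eig_iff: "poly (char_poly (M::real^'n^'n)) v = 0 \<longleftrightarrow> (\<exists>x. x \<noteq> 0 \<and> M *v x = v *\<^sub>R x)"
proof -
  have "poly (char_poly M) v = 0 \<longleftrightarrow> \<not> invertible (cmat M v)"
    by (simp add: poly_char_poly invertible_det_nz)
  also have "\<dots> \<longleftrightarrow> (\<exists>x. x \<noteq> 0 \<and> cmat M v *v x = 0)"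
    unfolding invertible_left_inverse matrix_left_invertible_ker by blast
  also have "\<dots> \<longleftrightarrow> (\<exists>x. x \<noteq> 0 \<and> M *v x = v *\<^sub>R x)"
    by (auto simp: cmat_mult)
  finally show ?thesis .
qed

lemma p_nz: "char_poly A \<noteq> 0"
proof
  assume "char_poly A = 0"
  then have "poly (char_poly A) (real d + 1) = 0" by simp
  then obtain x where x: "x \<noteq> 0" "A *v x = (real d + 1) *\<^sub>R x" using eig_iff by blast
  define m where "m = Max (range (\<lambda>u. \<bar>x$u\<bar>))"
  have mge: "\<bar>x$u\<bar> \<le> m" for u unfolding m_def by (rule Max_ge) auto
  have "m \<in> range (\<lambda>u. \<bar>x$u\<bar>)" unfolding m_def by (rule Max_in) auto
  then obtain v where v: "\<bar>x$v\<bar> = m" by auto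
  have "(real d + 1) * \<bar>x$v\<bar> = \<bar>(A *v x)$v\<bar>" using x(2) by (simp add: abs_mult)
  also have "\<dots> \<le> (\<Sum>u\<in>{u. E v u}. \<bar>x$u\<bar>)" unfolding Av by (rule sum_abs)
  also have "\<dots> \<le> (\<Sum>u\<in>{u. E v u}. m)" by (rule sum_mono) (rule mge)
  also have "\<dots> = real d * m" by (simp add: reg)
  finally have "m = 0" using v by (simp add: algebra_simps)
  then have "x = 0" using mge by (simp add: vec_eq_iff)
  then show False using x by simp
qed


lemma ord_pos: "is_eigenvalue A m \<Longrightarrow> order m (char_poly A) \<ge> 1"
  using order_gt_0_iff[OF p_nz] unfolding is_eigenvalue_def by (simp add: Suc_le_eq)

lemma no_big_eig:
  assumes sec: "second_eigenvalue A \<le> lam" and lamd: "lam < real d"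
  and z: "z \<noteq> 0" "z \<bullet> one = 0" "A *v z = nu *\<^sub>R z" "nu > lam"
  shows False
proof -
  let ?p = "char_poly A"
  define T where "T = (\<lambda>m. {v. is_eigenvalue A v \<and> m \<le> v})"
  define S where "S = {m. is_eigenvalue A m \<and> (\<Sum>v\<in>T m. order v ?p) \<ge> 2}"
  have fin: "finite {m. is_eigenvalue A m}"
    using poly_roots_finite[OF p_nz] by (simp add: is_eigenvalue_def)
  have finS: "finite S" by (rule finite_subset[OF _ fin]) (auto simp: S_def)
  have finT: "finite (T m)" for m by (rule finite_subset[OF _ fin]) (auto simp: T_def)
  have secS: "second_eigenvalue A = Max S"
    unfolding second_eigenvalue_def S_def T_def ..
  have inS: "m \<le> lam" if "m \<in> S" for m
    using Max_ge[OF finS that] sec secS by simp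
  have sumge: "(\<Sum>v\<in>F. order v ?p) \<le> (\<Sum>v\<in>T m. order v ?p)" if "F \<subseteq> T m" for F m
    by (rule sum_mono2[OF finT that]) simp
  have one0: "one \<noteq> 0" by (simp add: one_def vec_eq_iff)
  have eigd: "is_eigenvalue A (real d)"
    unfolding is_eigenvalue_def eig_iff using A_one one0 by blast
  have eignu: "is_eigenvalue A nu"
    unfolding is_eigenvalue_def eig_iff using z by blast
  show False
  proof (cases "nu = real d")
    case False
    define m where "m = min nu (real d)"
    have "{nu, real d} \<subseteq> T m" using eigd eignu by (auto simp: T_def m_def)
    then have "(\<Sum>v\<in>{nu, real d}. order v ?p) \<le> (\<Sum>v\<in>T m. order v ?p)" by (rule sumge)
    moreover have "(\<Sum>v\<in>{nu, real d}. order v ?p) \<ge> 2"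
      using False ord_pos[OF eigd] ord_pos[OF eignu] by simp
    moreover have "is_eigenvalue A m" using eigd eignu by (auto simp: m_def min_def)
    ultimately have "m \<in> S" unfolding S_def by simp
    then have "m \<le> lam" by (rule inS)
    then show False using z(4) lamd by (simp add: m_def)
  next
    case True
    let ?N = "cmat A (real d)"
    have N1: "?N *v one = 0" by (simp add: cmat_mult A_one)
    have Nz: "?N *v z = 0" by (simp add: cmat_mult z(3) True)
    have zo: "z \<bullet> (\<chi> i. 1) = 0" using z(2) by (simp add: one_def)
    have "poly (pderiv ?p) (real d) = 0"
      unfolding poly_pderiv_char_poly
      using det_rmat_zero[OF N1[unfolded one_def] Nz zo z(1)] by simp
    moreover have "pderiv ?p \<noteq> 0"
    proof
      assume "pderiv ?p = 0"
      then have "degree ?p = 0" by (simp add: pderiv_eq_0_iff)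
      then obtain c where c: "?p = pCons c 0" by (rule degree_eq_zeroE)
      have "poly ?p (real d) = 0" using eigd by (simp add: is_eigenvalue_def)
      then have "c = 0" using c by simp
      then show False using c p_nz by simp
    qed
    ultimately have "order (real d) (pderiv ?p) \<noteq> 0" using order_root by blast
    moreover have "order (real d) ?p = Suc (order (real d) (pderiv ?p))"
      using order_pderiv[OF p_nz] eigd by (simp add: is_eigenvalue_def)
    ultimately have o2: "order (real d) ?p \<ge> 2" by simp
    have "{real d} \<subseteq> T (real d)" using eigd by (auto simp: T_def)
    then have "(\<Sum>v\<in>{real d}. order v ?p) \<le> (\<Sum>v\<in>T (real d). order v ?p)" by (rule sumge)
    then have "real d \<in> S" using o2 eigd unfolding S_def by simp
    then show False using inS lamd by force
  qed
qed

lemma quad0: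
  fixes a c :: real
  assumes "a \<ge> 0" "\<And>t. 2*t*a + t^2*c \<le> 0"
  shows "a = 0"
proof (rule ccontr)
  assume "a \<noteq> 0"
  then have a: "a > 0" using assms(1) by simp
  define t where "t = a / (\<bar>c\<bar> + 1)"
  have t: "t > 0" using a by (simp add: t_def)
  have "t * \<bar>c\<bar> < a" using a by (simp add: t_def field_simps)
  then have tc: "t * (t * \<bar>c\<bar>) < t * a" using t by simp
  have "- \<bar>c\<bar> \<le> c" by simp
  then have "t^2 * (- \<bar>c\<bar>) \<le> t^2 * c" by (rule mult_left_mono) simp
  then have "t^2 * c \<ge> - (t * (t * \<bar>c\<bar>))" by (simp add: power2_eq_square)
  with tc have "2*t*a + t^2*c > t * a" by linarith
  moreover have "t * a > 0" using t a by simp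
  ultimately show False using assms(2)[of t] by linarith
qed

lemma inner_expand:
  fixes a b :: "'b::real_inner"
  shows "(a + t *\<^sub>R b) \<bullet> (a + t *\<^sub>R b) = a \<bullet> a + 2*t*(a \<bullet> b) + t^2*(b \<bullet> b)"
  by (simp add: inner_add_left inner_add_right inner_commute[of b a] power2_eq_square algebra_simps)

lemma Asym2: "(A *v a) \<bullet> (A *v b) = (A *v (A *v a)) \<bullet> b"
  by (simp add: A_sym)

lemma var_bound:
  assumes noeig: "\<And>z nu. z \<noteq> 0 \<Longrightarrow> z \<bullet> one = 0 \<Longrightarrow> A *v z = nu *\<^sub>R z \<Longrightarrow> nu > lam \<Longrightarrow> False"
  and lam0: "lam > 0"
  and x: "x \<bullet> one = 0" "x \<bullet> sv = 0"
  shows "(A *v x) \<bullet> (A *v x) \<le> lam^2 * (x \<bullet> x)"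
proof -
  define f where "f = (\<lambda>x. (A *v x) \<bullet> (A *v x))"
  define W where "W = {x. x \<bullet> one = 0 \<and> x \<bullet> sv = 0}"
  have AW: "A *v y \<in> W" if "y \<in> W" for y
    using that unfolding W_def by (simp add: A_sym A_one A_sv)
  have W_add: "y + y' \<in> W" if "y \<in> W" "y' \<in> W" for y y'
    using that unfolding W_def by (simp add: inner_add_left)
  have W_diff: "y - y' \<in> W" if "y \<in> W" "y' \<in> W" for y y'
    using that unfolding W_def by (simp add: inner_diff_left)
  have W_scale: "c *\<^sub>R y \<in> W" if "y \<in> W" for y c
    using that unfolding W_def by simp
  define K where "K = W \<inter> sphere 0 1"
  have "W = {y. one \<bullet> y = 0} \<inter> {y. sv \<bullet> y = 0}" unfolding W_def by (auto simp: inner_commute)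
  then have "closed W" by (simp add: closed_Int closed_hyperplane)
  then have compK: "compact K" unfolding K_def by (simp add: closed_Int_compact)
  have xW: "x \<in> W" using x by (simp add: W_def)
  show ?thesis
  proof (cases "x = 0")
    case True
    then show ?thesis by simp
  next
    case False
    have "(1 / norm x) *\<^sub>R x \<in> K" using False xW W_scale by (simp add: K_def)
    then have "K \<noteq> {}" by blast
    moreover have "continuous_on K f" unfolding f_def by (intro continuous_intros)
    ultimately obtain x0 where x0K: "x0 \<in> K" and x0max: "\<forall>y\<in>K. f y \<le> f x0"
      using continuous_attains_sup[OF compK] by blast
    define mu where "mu = f x0"
    have x0W: "x0 \<in> W" and nx0: "norm x0 = 1" using x0K by (auto simp: K_def)
    have x0x0: "x0 \<bullet> x0 = 1" using nx0 by (simp add: power2_norm_eq_inner[symmetric])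
    have bound: "f y \<le> mu * (y \<bullet> y)" if "y \<in> W" for y
    proof (cases "y = 0")
      case True then show ?thesis by (simp add: f_def)
    next
      case False
      define u where "u = (1 / norm y) *\<^sub>R y"
      have "u \<in> K" using False that W_scale by (simp add: K_def u_def)
      then have "f u \<le> mu" using x0max by (simp add: mu_def)
      moreover have "f y = (norm y)^2 * f u"
        using False by (simp add: f_def u_def matrix_vector_mult_scaleR power2_eq_square)
      moreover have "y \<bullet> y = (norm y)^2" by (simp add: power2_norm_eq_inner)
      ultimately show ?thesis using mult_right_mono[of "f u" mu "(norm y)^2"] by (simp add: mult_ac)
    qed
    define h where "h = A *v (A *v x0) - mu *\<^sub>R x0"
    have hW: "h \<in> W" unfolding h_def using x0W AW W_diff W_scale by blast
    have "2*t*(h \<bullet> h) + t^2*(f h - mu * (h \<bullet> h)) \<le> 0" for t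
    proof -
      have b: "f (x0 + t *\<^sub>R h) \<le> mu * ((x0 + t *\<^sub>R h) \<bullet> (x0 + t *\<^sub>R h))"
        using bound x0W hW W_add W_scale by blast
      have e1: "f (x0 + t *\<^sub>R h) = f x0 + 2*t*((A *v (A *v x0)) \<bullet> h) + t^2 * f h"
        unfolding f_def
        by (simp only: matrix_vector_right_distrib matrix_vector_mult_scaleR inner_expand Asym2)
      have e2: "(x0 + t *\<^sub>R h) \<bullet> (x0 + t *\<^sub>R h) = 1 + 2*t*(x0 \<bullet> h) + t^2*(h \<bullet> h)"
        using x0x0 by (simp only: inner_expand)
      have e3: "(A *v (A *v x0)) \<bullet> h = h \<bullet> h + mu * (x0 \<bullet> h)"
        by (simp add: h_def inner_diff_left)
      have "mu + 2*t*(h \<bullet> h + mu * (x0 \<bullet> h)) + t^2 * f h \<le> mu * (1 + 2*t*(x0 \<bullet> h) + t^2*(h \<bullet> h))"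
        using b unfolding e1 e2 e3 mu_def[symmetric] .
      then show ?thesis by (simp add: algebra_simps)
    qed
    then have "h \<bullet> h = 0" by (intro quad0) simp_all
    then have AAx0: "A *v (A *v x0) = mu *\<^sub>R x0" by (simp add: h_def)
    have "mu \<le> lam^2"
    proof (rule ccontr)
      assume "\<not> mu \<le> lam^2"
      then have mu: "mu > lam^2" by simp
      define nu where "nu = sqrt mu"
      have nu: "nu > lam" unfolding nu_def using mu lam0 by (simp add: real_less_rsqrt)
      have mu0: "mu \<ge> 0" using mu zero_le_power2[of lam] by linarith
      have nu2: "nu * nu = mu" unfolding nu_def using mu0 by simp
      define y where "y = A *v x0 + nu *\<^sub>R x0"
      have "A *v y = mu *\<^sub>R x0 + nu *\<^sub>R (A *v x0)"
        by (simp add: y_def matrix_vector_right_distrib matrix_vector_mult_scaleR AAx0)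
      also have "\<dots> = nu *\<^sub>R y"
        by (simp add: y_def scaleR_add_right nu2[symmetric] add.commute)
      finally have Ay: "A *v y = nu *\<^sub>R y" .
      have yW: "y \<in> W" unfolding y_def using x0W AW W_add W_scale by blast
      show False
      proof (cases "y = 0")
        case False
        then show False using noeig[OF False _ Ay nu] yW by (simp add: W_def)
      next
        case True
        then have Ax0: "A *v x0 = (- nu) *\<^sub>R x0" by (simp add: y_def eq_neg_iff_add_eq_0)
        define z where "z = sv * x0"
        have Az: "A *v z = nu *\<^sub>R z"
          by (simp add: z_def A_svmult Ax0 mult_scaleR_right)
        have "z \<bullet> z = 1" using x0x0 by (simp add: z_def sv_mult_inner)
        then have "z \<noteq> 0" by auto
        moreover have "z \<bullet> one = 0" using x0W by (simp add: z_def sv_mult_one W_def)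
        ultimately show False using noeig Az nu by blast
      qed
    qed
    then have "mu * (x \<bullet> x) \<le> lam^2 * (x \<bullet> x)" by (rule mult_right_mono) simp
    then show ?thesis using bound[OF xW] unfolding f_def by linarith
  qed
qed
end


context bg begin

lemma sum_ind: "(\<Sum>v\<in>UNIV. if v \<in> (U::'a set) then 1 else 0::real) = real (card U)"
  by (simp add: sum.inter_filter[symmetric])

lemma expansion:
  assumes VB: "\<And>x. x \<bullet> one = 0 \<Longrightarrow> x \<bullet> sv = 0 \<Longrightarrow> (A *v x) \<bullet> (A *v x) \<le> lam^2 * (x \<bullet> x)"
  and lam0: "lam > 0" and lamd: "lam < real d / 2" and U: "U \<noteq> {}"
  and small: "real (card U) < lam^2 * real CARD('a) / (real d)^2"
  shows "real (card (nbhd E (U::'a set))) > (real d - 2*lam)^2 / (4*lam^2) * real (card U)"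
proof -
  define n where "n = real CARD('a)"
  define k where "k = real (card U)"
  have n0: "n > 0" by (simp add: n_def)
  have k0: "k > 0" using U by (simp add: k_def card_gt_0_iff)
  have d0: "real d > 0" using dpos by simp
  define x where "x = (\<chi> v. if v \<in> U then (1::real) else 0)"
  have xx: "x \<bullet> x = k"
    unfolding x_def k_def inner_vec_def by (simp add: if_distrib[of "\<lambda>a. a * _"] sum_ind cong: if_cong)
  have x1: "x \<bullet> one = k"
    unfolding x_def k_def one_def inner_vec_def by (simp add: sum_ind)
  define a where "a = x \<bullet> sv"
  have absa: "\<bar>a\<bar> \<le> k"
  proof -
    have "\<bar>a\<bar> \<le> (\<Sum>v\<in>UNIV. \<bar>x$v * sv$v\<bar>)" unfolding a_def inner_vec_def inner_real_def by (rule sum_abs)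
    also have "\<dots> = (\<Sum>v\<in>UNIV. if v \<in> U then 1 else 0)"
      by (rule sum.cong) (auto simp: x_def sv_def)
    finally show ?thesis by (simp add: sum_ind k_def)
  qed
  define al where "al = k / n"
  define be where "be = a / n"
  define w where "w = x - al *\<^sub>R one - be *\<^sub>R sv"
  have w1: "w \<bullet> one = 0"
    using n0 by (simp add: w_def inner_diff_left x1 one_one inner_commute[of sv one] one_sv al_def n_def)
  have w2: "w \<bullet> sv = 0"
    using n0 by (simp add: w_def inner_diff_left a_def[symmetric] sv_sv one_sv be_def n_def)
  have xw: "x = w + al *\<^sub>R one + be *\<^sub>R sv" by (simp add: w_def)
  have Ax: "A *v x = (al * real d) *\<^sub>R one + (- be * real d) *\<^sub>R sv + A *v w"
    unfolding xw by (simp add: matrix_vector_right_distrib matrix_vector_mult_scaleR A_one A_sv algebra_simps)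
  have w1': "one \<bullet> w = 0" using w1 by (simp add: inner_commute)
  have w2': "sv \<bullet> w = 0" using w2 by (simp add: inner_commute)
  have oAw: "one \<bullet> (A *v w) = 0" using A_sym[of one w] by (simp add: A_one w1')
  have sAw: "sv \<bullet> (A *v w) = 0" using A_sym[of sv w] by (simp add: A_sv w2')
  have so: "sv \<bullet> one = 0" using one_sv by (simp add: inner_commute)
  have AxAx: "(A *v x) \<bullet> (A *v x) = (al * real d)^2 * n + (be * real d)^2 * n + (A *v w) \<bullet> (A *v w)"
    unfolding Ax
    by (simp add: inner_add_left inner_add_right oAw sAw one_sv so one_one sv_sv
        inner_commute[of "A *v w" one] inner_commute[of "A *v w" sv] n_def power2_eq_square algebra_simps)
  have xx2: "x \<bullet> x = al^2 * n + be^2 * n + w \<bullet> w"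
    unfolding xw
    by (simp add: inner_add_left inner_add_right w1 w2 w1' w2' one_sv so one_one sv_sv
        inner_commute[of w one] inner_commute[of w sv] n_def power2_eq_square algebra_simps)
  have Aww: "(A *v w) \<bullet> (A *v w) \<le> lam^2 * (w \<bullet> w)" by (rule VB[OF w1 w2])
  have alk: "al^2 * n = k^2 / n" using n0 by (simp add: al_def power2_eq_square)
  have bek: "be^2 * n = a^2 / n" using n0 by (simp add: be_def power2_eq_square)
  have "\<bar>a\<bar> \<le> \<bar>k\<bar>" using absa k0 by simp
  then have a2: "a^2 \<le> k^2" by (simp only: abs_le_square_iff)
  define r where "r = al^2*n + be^2*n"
  have r0: "r \<ge> 0" using n0 by (simp add: r_def)
  have "a^2/n \<le> k^2/n" by (rule divide_right_mono[OF a2]) (use n0 in simp)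
  then have r2: "r \<le> 2 * (k^2/n)" unfolding r_def alk bek by linarith
  have ww: "w \<bullet> w = k - r" using xx2 xx unfolding r_def by linarith
  have AxE: "(A *v x) \<bullet> (A *v x) = (real d)^2 * r + (A *v w) \<bullet> (A *v w)"
    using AxAx unfolding r_def by (simp add: power_mult_distrib ring_distribs mult_ac)
  have "(real d)^2 * k / n < lam^2"
  proof -
    have "k * (real d)^2 < lam^2 * n" using small d0 by (simp add: k_def n_def field_simps)
    then show ?thesis using n0 by (simp add: field_simps)
  qed
  then have dk: "2 * k * ((real d)^2 * k / n) < 2 * k * lam^2" by (rule mult_strict_left_mono) (use k0 in simp)
  have "(A *v x) \<bullet> (A *v x) \<le> (real d)^2 * r + lam^2 * (k - r)" using Aww ww AxE by simp
  also have "\<dots> \<le> (real d)^2 * r + lam^2 * k" using r0 by (simp add: right_diff_distrib)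
  also have "\<dots> \<le> (real d)^2 * (2 * (k^2/n)) + lam^2 * k" using mult_left_mono[OF r2, of "(real d)^2"] by simp
  also have "(real d)^2 * (2 * (k^2/n)) = 2 * k * ((real d)^2 * k / n)" by (simp add: power2_eq_square)
  finally have "(A *v x) \<bullet> (A *v x) \<le> 2 * k * ((real d)^2 * k / n) + lam^2 * k" .
  then have "(A *v x) \<bullet> (A *v x) < 2 * k * lam^2 + lam^2 * k" using dk by linarith
  then have AxB: "(A *v x) \<bullet> (A *v x) < 3 * lam^2 * k" by (simp add: mult_ac)
  define T where "T = {v. \<exists>u\<in>U. E v u}"
  define t where "t = (\<chi> v. if v \<in> T then (1::real) else 0)"
  have tt: "t \<bullet> t = real (card T)"
    unfolding t_def inner_vec_def by (simp add: if_distrib[of "\<lambda>a. a * _"] sum_ind cong: if_cong)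
  have tAx: "t \<bullet> (A *v x) = one \<bullet> (A *v x)"
    unfolding inner_vec_def
  proof (rule sum.cong[OF refl])
    fix v
    show "t$v \<bullet> (A *v x)$v = one$v \<bullet> (A *v x)$v"
    proof (cases "v \<in> T")
      case True then show ?thesis by (simp add: t_def one_def)
    next
      case False
      then have "(A *v x)$v = 0" unfolding Av by (auto simp: T_def x_def intro!: sum.neutral)
      then show ?thesis by simp
    qed
  qed
  have oAx: "one \<bullet> (A *v x) = real d * k"
    using A_sym[of one x] x1 by (simp add: A_one inner_commute[of one x])
  have "(real d * k)^2 \<le> (t \<bullet> t) * ((A *v x) \<bullet> (A *v x))"
    using Cauchy_Schwarz_ineq[of t "A *v x"] tAx oAx by simp
  note CS = this
  have dk0: "(real d * k)^2 > 0" using d0 k0 by simp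
  have tpos: "t \<bullet> t > 0"
  proof (rule ccontr)
    assume "\<not> t \<bullet> t > 0"
    then have "t \<bullet> t = 0" using inner_ge_zero[of t] by linarith
    then show False using CS dk0 by simp
  qed
  have "(t \<bullet> t) * ((A *v x) \<bullet> (A *v x)) < (t \<bullet> t) * (3 * lam^2 * k)"
    by (rule mult_strict_left_mono[OF AxB tpos])
  with CS have "(real d * k)^2 < (t \<bullet> t) * (3 * lam^2 * k)" by linarith
  then have main: "(real d)^2 * k < 3 * lam^2 * real (card T)"
    using k0 tt by (simp add: power_mult_distrib power2_eq_square algebra_simps)
  have "T \<subseteq> U \<union> nbhd E U" by (auto simp: T_def nbhd_def dest: sym)
  then have "card T \<le> card (U \<union> nbhd E U)" by (simp add: card_mono)
  also have "\<dots> \<le> card U + card (nbhd E U)" by (rule card_Un_le)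
  finally have "real (card T) \<le> k + real (card (nbhd E U))" by (simp add: k_def)
  then have "3 * lam^2 * real (card T) \<le> 3 * lam^2 * (k + real (card (nbhd E U)))"
    by (rule mult_left_mono) simp
  with main have M: "(real d)^2 * k < 3 * lam^2 * (k + real (card (nbhd E U)))" by linarith
  define N where "N = real (card (nbhd E U))"
  have l2: "lam^2 > 0" using lam0 by simp
  have h1: "real d * lam > 2 * lam * lam" using lamd lam0 by simp
  have h2: "0 \<le> real d * real d" by simp
  have expand: "4 * ((real d)^2 - 3*lam^2) - 3*(real d - 2*lam)^2 = real d * real d + 12*(real d*lam) - 24*(lam*lam)"
    by (simp add: power2_eq_square algebra_simps)
  have key: "3 * (real d - 2*lam)^2 \<le> 4 * ((real d)^2 - 3 * lam^2)"
    using expand h1 h2 by linarith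
  have "3 * (real d - 2*lam)^2 * k \<le> 4 * ((real d)^2 - 3 * lam^2) * k"
    by (rule mult_right_mono[OF key]) (use k0 in simp)
  also have "4 * ((real d)^2 - 3 * lam^2) * k = 4 * ((real d)^2 * k - 3 * lam^2 * k)"
    by (simp add: algebra_simps)
  also have "\<dots> < 4 * (3 * lam^2 * N)"
    using M by (simp add: N_def algebra_simps)
  finally have "(real d - 2*lam)^2 * k < 4 * lam^2 * N" by (simp add: mult_ac)
  then have "(real d - 2*lam)^2 * k / (4 * lam^2) < N"
    using l2 by (simp add: pos_divide_less_eq mult.commute)
  then show ?thesis by (simp add: N_def k_def)
qed

end
theorem corollary10:
  fixes E :: "'a::finite \<Rightarrow> 'a \<Rightarrow> bool" and d :: nat and lam :: real and U :: "'a set"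
  assumes "simple_graph E" and "regular E d" and "bipartite E"
    and "second_eigenvalue (adj_matrix E) \<le> lam"
    and "0 < lam" and "lam < real d / 2"
    and "U \<noteq> {}"
    and "real (card U) < lam ^ 2 * real CARD('a) / (real d) ^ 2"
  shows "real (card (nbhd E U)) > (real d - 2 * lam) ^ 2 / (4 * lam ^ 2) * real (card U)"
proof -
  obtain X where bipX: "\<forall>u v. E u v \<longrightarrow> (u \<in> X \<longleftrightarrow> v \<notin> X)"
    using assms(3) unfolding bipartite_def by blast
  have d0: "d > 0" using assms(5,6) by (cases d) auto
  interpret bg E d X
    by unfold_locales (use assms(1,2) bipX d0 in \<open>auto simp: simple_graph_def regular_def\<close>)
  have sec: "second_eigenvalue A \<le> lam" using assms(4) by (simp add: A_def)
  have lamd: "lam < real d" using assms(5,6) by simp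
  have noeig: "\<And>z nu. z \<noteq> 0 \<Longrightarrow> z \<bullet> one = 0 \<Longrightarrow> A *v z = nu *\<^sub>R z \<Longrightarrow> nu > lam \<Longrightarrow> False"
    using no_big_eig[OF sec lamd] by blast
  have VB: "\<And>x. x \<bullet> one = 0 \<Longrightarrow> x \<bullet> sv = 0 \<Longrightarrow> (A *v x) \<bullet> (A *v x) \<le> lam^2 * (x \<bullet> x)"
    by (rule var_bound[OF noeig assms(5)])
  show ?thesis by (rule expansion[OF VB assms(5,6,7,8)])
qed

end
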